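(* Let $M$ be a connected one-manifold (one of $\mathbb{R}$, $[0,1)$, $[0,1]$, $S^1$) and let $\{I_i \subset M : i \in \mathbb{Z}\}$ be a family of pairwise disjoint open intervals of finite length such that $U = \bigcup_i I_i$ is dense in $M$. Let $l_i$ denote the length of $I_i$. Let $l_i' > 0$ be real numbers such that whenever $S \subset \mathbb{Z}$ is such that $\bigcup_{i\in S} I_i$ is contained in some bounded interval, $\sum_{i \in S} l_i' < \infty$ (in particular this holds if $\sum_{i\in\mathbb{Z}} l_i' < \infty$). Then there exists a homeomorphism $\phi$ of $M$ onto its image $\phi(M)$ (a one-manifold of the same type, with its Euclidean length) such that for each $i$ the length of $\phi(I_i)$ is $l_i'$, and $m(\phi(C)) = 0$, where $C = M \setminus U$ and $m$ denotes Lebesgue measure.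
   Context: Lengths and Lebesgue measure on $M$ and on $\phi(M)$ refer to the standard Euclidean length (on a circle, arc length). *)

theory Defs
  imports "HOL-Analysis.Analysis"
begin

text \<open>The three connected one-manifolds realised as subsets of the real line:
  the line, the half-open interval [0,1) and the closed interval [0,1].
  The circle S^1 is realised as the unit circle in the complex plane.\<close>

definition line_models :: "real set set" where
  "line_models = {UNIV, {0..<1}, {0..1}}"

definition circle_measure :: "real \<Rightarrow> complex measure" where
  "circle_measure r = distr (restrict_space lborel {0..<2*pi*r}) borel (\<lambda>s. of_real r * cis (s / r))"

end

theory Submission
  imports Defs "HOL-Library.Nat_Bijection"
begin

lemma aff_meas:
  fixes m \<delta> :: real
  assumes "m \<noteq> 0" "S \<in> sets lebesgue"
  shows "(\<lambda>x. m *\<^sub>R x + \<delta>) ` S \<in> sets lebesgue"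
proof -
  have meas: "(\<lambda>y. (- \<delta> / m) + ((1/m) * y)) \<in> lebesgue \<rightarrow>\<^sub>M lebesgue"
    using lebesgue_affine_measurable[of "\<lambda>_. 1/m" "- \<delta> / m"] assms by simp
  have "(\<lambda>x. m *\<^sub>R x + \<delta>) ` S = (\<lambda>y. (- \<delta> / m) + ((1/m) * y)) -` S \<inter> space lebesgue"
  proof (intro set_eqI iffI)
    fix y assume "y \<in> (\<lambda>x. m *\<^sub>R x + \<delta>) ` S"
    then obtain z where "z \<in> S" "y = m * z + \<delta>" by auto
    then show "y \<in> (\<lambda>y. (- \<delta> / m) + ((1/m) * y)) -` S \<inter> space lebesgue"
      using assms by (simp add: field_simps)
  next
    fix y assume "y \<in> (\<lambda>y. (- \<delta> / m) + ((1/m) * y)) -` S \<inter> space lebesgue"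
    then have "- \<delta>/m + 1/m*y \<in> S" by simp
    then show "y \<in> (\<lambda>x. m *\<^sub>R x + \<delta>) ` S"
      by (rule rev_image_eqI) (use assms in \<open>simp add: field_simps\<close>)
  qed

  then show ?thesis using measurable_sets[OF meas assms(2)] by simp
qed

lemma strict_inj:
  fixes f :: "real \<Rightarrow> real"
  assumes "\<And>x y. x \<in> S \<Longrightarrow> y \<in> S \<Longrightarrow> x < y \<Longrightarrow> f x < f y"
  shows "inj_on f S"
  by (rule inj_onI) (metis assms linorder_neqE_linordered_idom less_irrefl)

locale gaps =
  fixes J :: "nat \<Rightarrow> real set" and a b l :: "nat \<Rightarrow> real"
  assumes ab: "\<And>n. a n < b n"
    and J_eq: "\<And>n. J n = {a n<..<b n}"
    and disj: "\<And>n m. n \<noteq> m \<Longrightarrow> J n \<inter> J m = {}"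
    and lpos: "\<And>n. l n > 0"
    and summ: "\<And>S. (\<exists>c d. (\<Union>n\<in>S. J n) \<subseteq> {c..d}) \<Longrightarrow> l summable_on S"
begin

definition cc :: "nat \<Rightarrow> real" where "cc n = l n / (b n - a n)"

lemma cc_pos: "cc n > 0" using ab[of n] lpos[of n] by (simp add: cc_def)

definition gE :: "real \<Rightarrow> ennreal" where
  "gE x = (\<Sum>n. ennreal (cc n) * indicator (J n) x)"

lemma J_borel[measurable]: "J n \<in> sets borel" by (simp add: J_eq)

lemma gE_meas[measurable]: "gE \<in> borel_measurable borel"
  unfolding gE_def by measurable

definition \<nu> :: "real measure" where "\<nu> = density lborel gE"

lemma sets_nu[simp, measurable_cong]: "sets \<nu> = sets borel"
  by (simp add: \<nu>_def)

lemma nu_formula: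
  assumes [measurable]: "A \<in> sets borel"
  shows "emeasure \<nu> A = (\<Sum>n. ennreal (cc n) * emeasure lborel (J n \<inter> A))"
proof -
  have "emeasure \<nu> A = (\<integral>\<^sup>+ x. gE x * indicator A x \<partial>lborel)"
    unfolding \<nu>_def by (rule emeasure_density) auto
  also have "\<dots> = (\<integral>\<^sup>+ x. (\<Sum>n. ennreal (cc n) * indicator (J n \<inter> A) x) \<partial>lborel)"
    unfolding gE_def
    by (intro nn_integral_cong) (simp add: ennreal_suminf_multc[symmetric] indicator_inter_arith mult.assoc)
  also have "\<dots> = (\<Sum>n. (\<integral>\<^sup>+ x. ennreal (cc n) * indicator (J n \<inter> A) x \<partial>lborel))"
    by (rule nn_integral_suminf) auto
  also have "\<dots> = (\<Sum>n. ennreal (cc n) * emeasure lborel (J n \<inter> A))"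
    by (intro suminf_cong nn_integral_cmult_indicator) auto
  finally show ?thesis .
qed

lemma J_unique: "x \<in> J n \<Longrightarrow> x \<in> J m \<Longrightarrow> n = m"
  using disj by blast

definition idx :: "real \<Rightarrow> nat" where "idx x = (SOME n. x \<in> J n)"

lemma idx: "x \<in> J n \<Longrightarrow> idx x = n"
  unfolding idx_def by (metis (mono_tags, lifting) J_unique someI_ex)

lemma meet_bounded:
  "(\<Union>n\<in>{n. J n \<inter> {c..d} \<noteq> {}}. J n) \<subseteq> {min c (a (idx c))..max d (b (idx d))}"
proof
  fix z assume "z \<in> (\<Union>n\<in>{n. J n \<inter> {c..d} \<noteq> {}}. J n)"
  then obtain n y where n: "y \<in> J n" "c \<le> y" "y \<le> d" "z \<in> J n" by auto
  have "min c (a (idx c)) \<le> z"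
  proof (cases "c \<in> J n")
    case True then show ?thesis using idx[OF True] n by (auto simp: J_eq)
  next
    case False
    then have "c \<le> a n" using n by (auto simp: J_eq)
    then show ?thesis using n by (auto simp: J_eq)
  qed
  moreover have "z \<le> max d (b (idx d))"
  proof (cases "d \<in> J n")
    case True then show ?thesis using idx[OF True] n by (auto simp: J_eq)
  next
    case False
    then have "b n \<le> d" using n by (auto simp: J_eq)
    then show ?thesis using n by (auto simp: J_eq)
  qed
  ultimately show "z \<in> {min c (a (idx c))..max d (b (idx d))}" by auto
qed

lemma summable_meet: "summable (\<lambda>n. if J n \<inter> {c..d} \<noteq> {} then l n else 0)"
proof -
  let ?S = "{n. J n \<inter> {c..d} \<noteq> {}}"
  have "l summable_on ?S" using summ meet_bounded by blast
  moreover have "(\<lambda>n. if n \<in> ?S then l n else 0) summable_on UNIV \<longleftrightarrow> l summable_on ?S"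
    by (rule summable_on_cong_neutral) auto
  ultimately have "(\<lambda>n. if n \<in> ?S then l n else 0) summable_on UNIV" by simp
  then show ?thesis using summable_on_imp_summable by simp
qed

lemma term_le: "ennreal (cc n) * emeasure lborel (J n \<inter> A) \<le> ennreal (l n)"
proof -
  have "emeasure lborel (J n \<inter> A) \<le> emeasure lborel (J n)"
    by (intro emeasure_mono) auto
  also have "\<dots> = ennreal (b n - a n)" using ab[of n] by (simp add: J_eq)
  finally have "ennreal (cc n) * emeasure lborel (J n \<inter> A) \<le> ennreal (cc n) * ennreal (b n - a n)"
    by (intro mult_left_mono) auto
  also have "\<dots> = ennreal (l n)" using ab[of n] cc_pos[of n]
    by (simp add: ennreal_mult[symmetric] cc_def)
  finally show ?thesis .
qed

lemma nu_fin: "emeasure \<nu> {c..d} < \<infinity>"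
proof -
  have "emeasure \<nu> {c..d} = (\<Sum>n. ennreal (cc n) * emeasure lborel (J n \<inter> {c..d}))"
    by (rule nu_formula) auto
  also have "\<dots> \<le> (\<Sum>n. ennreal (if J n \<inter> {c..d} \<noteq> {} then l n else 0))"
    by (intro suminf_le) (auto simp: term_le)
  also have "\<dots> = ennreal (\<Sum>n. if J n \<inter> {c..d} \<noteq> {} then l n else 0)"
    by (rule suminf_ennreal2) (use lpos less_imp_le summable_meet in auto)
  also have "\<dots> < \<infinity>" by simp
  finally show ?thesis .
qed

lemma nu_fin_sub: "A \<subseteq> {c..d} \<Longrightarrow> emeasure \<nu> A < \<infinity>"
  using emeasure_mono[of A "{c..d}" \<nu>] nu_fin[of c d] by auto

lemma nu_point: "emeasure \<nu> {x} = 0"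
proof -
  have "emeasure \<nu> {x} = (\<Sum>n. ennreal (cc n) * emeasure lborel (J n \<inter> {x}))"
    by (rule nu_formula) auto
  also have "\<dots> = (\<Sum>n. 0)"
  proof (intro suminf_cong)
    fix n
    have "emeasure lborel (J n \<inter> {x}) \<le> emeasure lborel {x}" by (intro emeasure_mono) auto
    then show "ennreal (cc n) * emeasure lborel (J n \<inter> {x}) = 0" by simp
  qed
  finally show ?thesis by simp
qed

definition F :: "real \<Rightarrow> real \<Rightarrow> real" where "F x y = enn2real (emeasure \<nu> {x<..y})"

lemma F_nonneg: "F x y \<ge> 0" by (simp add: F_def)

lemma nu_F: "emeasure \<nu> {x<..y} = ennreal (F x y)"
proof -
  have "emeasure \<nu> {x<..y} < \<infinity>" by (rule nu_fin_sub[of _ x y]) auto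
  then show ?thesis unfolding F_def by (simp add: less_top)
qed

lemma nu_add:
  assumes "x \<le> y" "y \<le> z"
  shows "emeasure \<nu> {x<..z} = emeasure \<nu> {x<..y} + emeasure \<nu> {y<..z}"
proof -
  have "{x<..z} = {x<..y} \<union> {y<..z}" using assms by auto
  moreover have "emeasure \<nu> {x<..y} + emeasure \<nu> {y<..z} = emeasure \<nu> ({x<..y} \<union> {y<..z})"
    by (rule plus_emeasure) auto
  ultimately show ?thesis by simp
qed

lemma F_add: "x \<le> y \<Longrightarrow> y \<le> z \<Longrightarrow> F x z = F x y + F y z"
  using nu_add[of x y z] by (simp add: nu_F ennreal_plus[symmetric] F_nonneg del: ennreal_plus)

lemma nu_closed: "x \<le> y \<Longrightarrow> emeasure \<nu> {x..y} = emeasure \<nu> {x<..y}"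
proof -
  assume "x \<le> y"
  then have "{x..y} = {x} \<union> {x<..y}" by auto
  moreover have "emeasure \<nu> {x} + emeasure \<nu> {x<..y} = emeasure \<nu> ({x} \<union> {x<..y})"
    by (rule plus_emeasure) auto
  ultimately show ?thesis by (simp add: nu_point)
qed

definition phi :: "real \<Rightarrow> real \<Rightarrow> real" where
  "phi x0 x = (if x0 \<le> x then F x0 x else - F x x0)"

lemma phi_base: "phi x0 x0 = 0"
  by (simp add: phi_def F_def)

lemma phi_diff: "x \<le> y \<Longrightarrow> phi x0 y - phi x0 x = F x y"
  unfolding phi_def using F_add[of x0 x y] F_add[of x y x0] F_add[of x x0 y]
  by auto

lemma phi_mono: "x \<le> y \<Longrightarrow> phi x0 x \<le> phi x0 y"
  using phi_diff[of x y x0] F_nonneg[of x y] by linarith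

lemma gE_in: "x \<in> J n \<Longrightarrow> gE x = ennreal (cc n)"
proof -
  assume x: "x \<in> J n"
  have "gE x = (\<Sum>m\<in>{n}. ennreal (cc m) * indicator (J m) x)"
    unfolding gE_def
    by (rule suminf_finite) (use x J_unique in \<open>auto simp: indicator_def\<close>)
  then show ?thesis using x by simp
qed

lemma gE_out: "x \<notin> (\<Union>n. J n) \<Longrightarrow> gE x = 0"
  unfolding gE_def by auto

definition g :: "real \<Rightarrow> real" where "g x = enn2real (gE x)"

lemma gE_g: "gE x = ennreal (g x)"
  unfolding g_def
  by (cases "x \<in> (\<Union>n. J n)") (auto simp: gE_in gE_out)

lemma g_nonneg: "g x \<ge> 0" by (simp add: g_def)

lemma g_meas[measurable]: "g \<in> borel_measurable borel"
  unfolding g_def by measurable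

lemma g_has_integral:
  assumes "c \<le> d"
  shows "(g has_integral F c d) {c..d}"
proof -
  let ?f = "\<lambda>x. g x * indicator {c..d} x"
  have "(\<integral>\<^sup>+x. ennreal (?f x) \<partial>lborel) = (\<integral>\<^sup>+x. gE x * indicator {c..d} x \<partial>lborel)"
    by (intro nn_integral_cong) (simp add: gE_g indicator_def)
  also have "\<dots> = emeasure \<nu> {c..d}"
    unfolding \<nu>_def by (rule emeasure_density[symmetric]) auto
  also have "\<dots> = ennreal (F c d)" using assms by (simp add: nu_closed nu_F)
  finally have "(?f has_integral F c d) UNIV"
    by (intro nn_integral_has_integral) (auto simp: g_nonneg F_nonneg)
  moreover have "?f = (\<lambda>x. if x \<in> {c..d} then g x else 0)"
    by (auto simp: indicator_def)
  ultimately show ?thesis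
    using has_integral_restrict_UNIV[of "{c..d}" g "F c d"] by simp
qed

lemma phi_cont: "continuous_on UNIV (phi x0)"
proof (intro continuous_at_imp_continuous_on ballI)
  fix x :: real
  let ?c = "x - 1" and ?d = "x + 1"
  have int: "g integrable_on {?c..?d}" using g_has_integral[of ?c ?d] by auto
  have "continuous_on {?c..?d} (\<lambda>y. integral {?c..y} g)"
    by (rule indefinite_integral_continuous_1[OF int])
  then have "continuous_on {?c..?d} (\<lambda>y. phi x0 ?c + integral {?c..y} g)"
    by (intro continuous_intros)
  moreover have "phi x0 y = phi x0 ?c + integral {?c..y} g" if "y \<in> {?c..?d}" for y
    using that phi_diff[of ?c y x0] integral_unique[OF g_has_integral[of ?c y]] by auto
  ultimately have "continuous_on {?c..?d} (phi x0)"
    using continuous_on_cong by (smt (verit, best))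
  then show "isCont (phi x0) x"
    by (rule continuous_on_interior) auto
qed

lemma cc_len: "cc n * (b n - a n) = l n"
  using ab[of n] by (simp add: cc_def)

lemma F_affine:
  assumes x: "a n \<le> x" "x \<le> b n"
  shows "F (a n) x = cc n * (x - a n)"
proof -
  have "emeasure \<nu> {a n<..x} = (\<Sum>m. ennreal (cc m) * emeasure lborel (J m \<inter> {a n<..x}))"
    by (rule nu_formula) auto
  also have "\<dots> = (\<Sum>m\<in>{n}. ennreal (cc m) * emeasure lborel (J m \<inter> {a n<..x}))"
  proof (rule suminf_finite)
    fix m assume "m \<notin> {n}"
    then have mn: "m \<noteq> n" by simp
    have "J m \<inter> {a n<..x} \<subseteq> {b n}"
    proof
      fix y assume y: "y \<in> J m \<inter> {a n<..x}"
      show "y \<in> {b n}"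
      proof (rule ccontr)
        assume "y \<notin> {b n}"
        then have "y \<in> J n" using y x by (auto simp: J_eq)
        then show False using y disj[OF mn] by auto
      qed
    qed
    then have "emeasure lborel (J m \<inter> {a n<..x}) \<le> emeasure lborel {b n}"
      by (intro emeasure_mono) auto
    then show "ennreal (cc m) * emeasure lborel (J m \<inter> {a n<..x}) = 0" by simp
  qed auto
  also have "\<dots> = ennreal (cc n) * ennreal (x - a n)"
  proof -
    have "emeasure lborel {a n<..<x} \<le> emeasure lborel (J n \<inter> {a n<..x})"
      using x by (intro emeasure_mono) (auto simp: J_eq)
    moreover have "emeasure lborel (J n \<inter> {a n<..x}) \<le> emeasure lborel {a n..x}"
      by (intro emeasure_mono) auto
    ultimately have "emeasure lborel (J n \<inter> {a n<..x}) = ennreal (x - a n)"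
      using x by (intro antisym) auto
    then show ?thesis by simp
  qed
  finally show ?thesis
    using x cc_pos[of n] by (simp add: F_def ennreal_mult[symmetric])
qed

lemma phi_affine:
  assumes "a n \<le> x" "x \<le> b n"
  shows "phi x0 x = phi x0 (a n) + cc n * (x - a n)"
  using phi_diff[of "a n" x x0] F_affine[OF assms] assms by simp

lemma phi_img: "phi x0 ` J n = {phi x0 (a n)<..<phi x0 (a n) + l n}"
proof
  show "phi x0 ` J n \<subseteq> {phi x0 (a n)<..<phi x0 (a n) + l n}"
  proof
    fix y assume "y \<in> phi x0 ` J n"
    then obtain x where x: "x \<in> J n" "y = phi x0 x" by auto
    then have "a n < x" "x < b n" by (auto simp: J_eq)
    then have "y = phi x0 (a n) + cc n * (x - a n)" using x phi_affine[of n x x0] by simp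
    moreover have "cc n * (x - a n) < cc n * (b n - a n)" "0 < cc n * (x - a n)"
      using \<open>a n < x\<close> \<open>x < b n\<close> cc_pos[of n] by auto
    ultimately show "y \<in> {phi x0 (a n)<..<phi x0 (a n) + l n}" using cc_len[of n] by auto
  qed
next
  show "{phi x0 (a n)<..<phi x0 (a n) + l n} \<subseteq> phi x0 ` J n"
  proof
    fix y assume y: "y \<in> {phi x0 (a n)<..<phi x0 (a n) + l n}"
    define x where "x = a n + (y - phi x0 (a n)) / cc n"
    have c: "cc n > 0" by (rule cc_pos)
    have "(y - phi x0 (a n)) / cc n < (b n - a n)"
      using y c cc_len[of n] by (simp add: divide_less_eq mult.commute)
    moreover have "0 < (y - phi x0 (a n)) / cc n" using y c by auto
    ultimately have xJ: "x \<in> J n" by (auto simp: J_eq x_def)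
    then have "phi x0 x = phi x0 (a n) + cc n * (x - a n)"
      by (intro phi_affine) (auto simp: J_eq)
    then have "phi x0 x = y" using c by (simp add: x_def)
    then show "y \<in> phi x0 ` J n" using xJ by blast
  qed
qed

lemma F_pos:
  assumes "x < y" "J n \<inter> {x<..<y} \<noteq> {}"
  shows "F x y > 0"
proof -
  let ?p = "max (a n) x" and ?q = "min (b n) y"
  have pq: "?p < ?q" using assms by (auto simp: J_eq)
  have "ennreal (?q - ?p) = emeasure lborel {?p<..<?q}" using pq by simp
  also have "\<dots> \<le> emeasure lborel (J n \<inter> {x<..y})"
    by (intro emeasure_mono) (auto simp: J_eq)
  finally have m: "0 < emeasure lborel (J n \<inter> {x<..y})"
    using pq by (metis ennreal_less_zero_iff diff_gt_0_iff_gt not_le order_less_le_trans)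
  have "ennreal (cc n) * emeasure lborel (J n \<inter> {x<..y})
        \<le> (\<Sum>m. ennreal (cc m) * emeasure lborel (J m \<inter> {x<..y}))"
    using sum_le_suminf[of "\<lambda>m. ennreal (cc m) * emeasure lborel (J m \<inter> {x<..y})" "{n}"]
    by auto
  also have "\<dots> = emeasure \<nu> {x<..y}" by (rule nu_formula[symmetric]) auto
  also have "\<dots> = ennreal (F x y)" by (rule nu_F)
  moreover have "0 < ennreal (cc n) * emeasure lborel (J n \<inter> {x<..y})"
    using m cc_pos[of n] by (simp add: ennreal_zero_less_mult_iff)
  ultimately have "0 < ennreal (F x y)" by order
  then show ?thesis by (simp add: ennreal_less_zero_iff)
qed

lemma phi_strict:
  assumes "x < y" "J n \<inter> {x<..<y} \<noteq> {}"
  shows "phi x0 x < phi x0 y"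
  using F_pos[OF assms] phi_diff[of x y x0] assms by linarith

lemma phi_image_Icc:
  assumes "c \<le> d"
  shows "phi x0 ` {c..d} = {phi x0 c..phi x0 d}"
proof
  show "phi x0 ` {c..d} \<subseteq> {phi x0 c..phi x0 d}" by (auto intro: phi_mono)
next
  show "{phi x0 c..phi x0 d} \<subseteq> phi x0 ` {c..d}"
  proof
    fix y assume "y \<in> {phi x0 c..phi x0 d}"
    then obtain x where "c \<le> x" "x \<le> d" "phi x0 x = y"
      using IVT'[of "phi x0" c y d] assms continuous_on_subset[OF phi_cont] by auto
    then show "y \<in> phi x0 ` {c..d}" by auto
  qed
qed

lemma phi_null:
  assumes cd: "c \<le> d" and inj: "inj_on (phi x0) {c..d}"
  shows "phi x0 ` ({c..d} - (\<Union>n. J n)) \<in> null_sets lebesgue"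
proof -
  let ?f = "phi x0"
  define A where "A n = ?f ` (J n \<inter> {c..d})" for n
  have Aeq: "A n = (\<lambda>x. cc n *\<^sub>R x + (?f (a n) - cc n * a n)) ` (J n \<inter> {c..d})" for n
    unfolding A_def
  proof (rule image_cong[OF refl])
    fix x assume "x \<in> J n \<inter> {c..d}"
    then have "a n \<le> x" "x \<le> b n" by (auto simp: J_eq)
    then show "?f x = cc n *\<^sub>R x + (?f (a n) - cc n * a n)"
      using phi_affine[of n x x0] by (simp add: algebra_simps)
  qed
  have Ameas: "A n \<in> sets lebesgue" for n
    unfolding Aeq using cc_pos[of n] by (intro aff_meas) auto
  have Aem: "emeasure lebesgue (A n) = ennreal (cc n) * emeasure lborel (J n \<inter> {c..d})" for n
    unfolding Aeq emeasure_lebesgue_affine using cc_pos[of n] by simp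
  have Adisj: "disjoint_family A"
  proof (unfold disjoint_family_on_def, intro ballI impI)
    fix n m :: nat assume "n \<noteq> m"
    show "A n \<inter> A m = {}"
    proof (rule ccontr)
      assume "A n \<inter> A m \<noteq> {}"
      then obtain x1 x2 where x: "x1 \<in> J n \<inter> {c..d}" "x2 \<in> J m \<inter> {c..d}" "?f x1 = ?f x2"
        unfolding A_def by blast
      then have "x1 = x2" using inj by (auto dest: inj_onD)
      then show False using x disj[OF \<open>n \<noteq> m\<close>] by auto
    qed
  qed
  have Asub: "(\<Union>n. A n) \<subseteq> {?f c..?f d}"
    unfolding A_def using phi_image_Icc[OF cd] by auto
  have eqK: "?f ` ({c..d} - (\<Union>n. J n)) = {?f c..?f d} - (\<Union>n. A n)"
  proof
    show "?f ` ({c..d} - (\<Union>n. J n)) \<subseteq> {?f c..?f d} - (\<Union>n. A n)"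
    proof
      fix y assume "y \<in> ?f ` ({c..d} - (\<Union>n. J n))"
      then obtain x where x: "x \<in> {c..d}" "x \<notin> (\<Union>n. J n)" "y = ?f x" by auto
      have "y \<notin> A n" for n
      proof
        assume "y \<in> A n"
        then obtain x' where "x' \<in> J n \<inter> {c..d}" "y = ?f x'" unfolding A_def by auto
        then have "x = x'" using x inj by (auto dest: inj_onD)
        then show False using x \<open>x' \<in> J n \<inter> {c..d}\<close> by auto
      qed
      then show "y \<in> {?f c..?f d} - (\<Union>n. A n)"
        using x phi_mono[of c x x0] phi_mono[of x d x0] by auto
    qed
  next
    show "{?f c..?f d} - (\<Union>n. A n) \<subseteq> ?f ` ({c..d} - (\<Union>n. J n))"
    proof
      fix y assume y: "y \<in> {?f c..?f d} - (\<Union>n. A n)"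
      have "y \<in> ?f ` {c..d}" using y phi_image_Icc[OF cd, of x0] by auto
      then obtain x where x: "x \<in> {c..d}" "y = ?f x" by auto
      have "x \<notin> J n" for n
      proof
        assume "x \<in> J n"
        then have "y \<in> A n" using x unfolding A_def by auto
        then show False using y by auto
      qed
      then show "y \<in> ?f ` ({c..d} - (\<Union>n. J n))" using x by auto
    qed
  qed
  have "emeasure lebesgue (\<Union>n. A n) = (\<Sum>n. emeasure lebesgue (A n))"
    by (rule suminf_emeasure[symmetric]) (use Ameas Adisj in auto)
  also have "\<dots> = emeasure \<nu> {c..d}" by (simp add: Aem nu_formula)
  also have "\<dots> = ennreal (?f d - ?f c)" using cd by (simp add: nu_closed nu_F phi_diff)
  also have "\<dots> = emeasure lebesgue {?f c..?f d}" using phi_mono[OF cd] by simp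
  finally have eq: "emeasure lebesgue (\<Union>n. A n) = emeasure lebesgue {?f c..?f d}" .
  have UAm: "(\<Union>n. A n) \<in> sets lebesgue" using Ameas by auto
  have "emeasure lebesgue ({?f c..?f d} - (\<Union>n. A n)) = emeasure lebesgue {?f c..?f d} - emeasure lebesgue (\<Union>n. A n)"
  proof (rule emeasure_Diff)
    show "emeasure lebesgue (\<Union>n. A n) \<noteq> \<infinity>" unfolding eq using phi_mono[OF cd, of x0] by simp
  qed (use Asub UAm in auto)
  also have "\<dots> = 0" using eq phi_mono[OF cd, of x0] by (simp add: ennreal_minus)
  moreover have "{?f c..?f d} - (\<Union>n. A n) \<in> sets lebesgue" using UAm by auto
  ultimately show ?thesis unfolding eqK by (simp add: null_sets_def)
qed

end

lemma cis_inj: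
  assumes "cis a = cis b" "\<bar>a - b\<bar> < 2*pi"
  shows "a = b"
proof -
  have "exp (\<i> * of_real a) = exp (\<i> * of_real b)" using assms by (simp add: cis_conv_exp)
  then obtain n :: int where n: "\<i> * of_real a = \<i> * of_real b + (of_int (2 * n) * pi) * \<i>"
    by (auto simp: exp_eq)
  have "Im (\<i> * of_real a) = Im (\<i> * of_real b + (of_int (2 * n) * pi) * \<i>)"
    using n by (rule arg_cong)
  then have ab: "a = b + 2 * n * pi" by simp
  then have "\<bar>2 * n * pi\<bar> < 2 * pi" using assms by simp
  then have "\<bar>real_of_int n\<bar> < 1" by (simp add: abs_mult)
  then have "n = 0" by linarith
  then show ?thesis using ab by simp
qed

lemma cis_period: "cis (t + 2*pi) = cis t"
  by (simp add: cis_mult[symmetric])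

lemma cis_period_int: "cis (t + 2 * pi * of_int k) = cis t"
  by (simp add: cis_mult[symmetric])

definition thet :: "real \<Rightarrow> complex \<Rightarrow> real" where
  "thet t0 z = t0 + Arg2pi (z / cis t0)"

lemma thet_range: "t0 \<le> thet t0 z" "thet t0 z < t0 + 2*pi"
  using Arg2pi[of "z / cis t0"] by (auto simp: thet_def)

lemma cis_thet: "z \<in> sphere 0 1 \<Longrightarrow> cis (thet t0 z) = z"
proof -
  assume z: "z \<in> sphere 0 1"
  have "is_Arg (z / cis t0) (Arg2pi (z / cis t0))" using Arg2pi by blast
  then have "z / cis t0 = cis (Arg2pi (z / cis t0))"
    using z by (simp add: is_Arg_def cis_conv_exp norm_divide)
  then show ?thesis
    unfolding thet_def by (simp add: cis_mult[symmetric] field_simps)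
qed

lemma thet_cis: "t0 \<le> t \<Longrightarrow> t < t0 + 2*pi \<Longrightarrow> thet t0 (cis t) = t"
  by (rule cis_inj) (use thet_range[of t0 "cis t"] cis_thet[of "cis t" t0] in auto)

lemma cis_image: "cis ` {t0..t0+2*pi} = sphere 0 1"
proof
  show "cis ` {t0..t0+2*pi} \<subseteq> sphere 0 1" by auto
  show "sphere 0 1 \<subseteq> cis ` {t0..t0+2*pi}"
  proof
    fix z :: complex assume "z \<in> sphere 0 1"
    then have "z = cis (thet t0 z)" by (simp add: cis_thet)
    moreover have "thet t0 z \<in> {t0..t0+2*pi}" using thet_range[of t0 z] by auto
    ultimately show "z \<in> cis ` {t0..t0+2*pi}" by blast
  qed
qed

lemma cont_via_cis:
  fixes \<Phi> :: "complex \<Rightarrow> 'b::t2_space"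
  assumes "continuous_on {t0..t0+2*pi} (\<Phi> \<circ> cis)"
  shows "continuous_on (sphere 0 1) \<Phi>"
proof -
  have q: "quotient_map (top_of_set {t0..t0+2*pi}) (top_of_set (sphere 0 1)) cis"
  proof (rule continuous_imp_quotient_map)
    show "continuous_map (top_of_set {t0..t0 + 2 * pi}) (top_of_set (sphere 0 1)) cis"
      using cis_image[of t0] by (auto simp: continuous_map_in_subtopology intro!: continuous_intros)
    show "compact_space (top_of_set {t0..t0 + 2 * pi})"
      by (simp add: compact_space_subtopology)
    show "Hausdorff_space (top_of_set (sphere (0::complex) 1))"
      by (simp add: Hausdorff_space_subtopology)
    show "cis ` topspace (top_of_set {t0..t0 + 2 * pi}) = topspace (top_of_set (sphere 0 1))"
      using cis_image by simp
  qed
  have "continuous_map (top_of_set {t0..t0+2*pi}) euclidean (\<Phi> \<circ> cis)"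
    using assms by simp
  then have "continuous_map (top_of_set (sphere 0 1)) euclidean \<Phi>"
    by (rule continuous_compose_quotient_map[OF q])
  then show ?thesis by simp
qed

lemma near_cis:
  assumes "e > 0"
  shows "\<exists>d>0. \<forall>u. norm u = 1 \<and> norm (u - cis t0) < d \<longrightarrow> (\<exists>s. \<bar>s\<bar> < e \<and> u = cis (t0 + s))"
proof -
  have "isCont Arg 1"
    by (rule continuous_at_Arg) (auto simp: complex_nonpos_Reals_iff)
  then obtain d where d: "d > 0" "\<And>z. dist z 1 < d \<Longrightarrow> dist (Arg z) (Arg 1) < e"
    using assms unfolding continuous_at_eps_delta by blast
  have "\<forall>u. norm u = 1 \<and> norm (u - cis t0) < d \<longrightarrow> (\<exists>s. \<bar>s\<bar> < e \<and> u = cis (t0 + s))"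
  proof (intro allI impI)
    fix u :: complex assume u: "norm u = 1 \<and> norm (u - cis t0) < d"
    let ?z = "u / cis t0"
    have "norm (?z - 1) = norm (u - cis t0)"
    proof -
      have "?z - 1 = (u - cis t0) / cis t0" by (simp add: field_simps)
      then show ?thesis by (simp add: norm_divide)
    qed
    then have "\<bar>Arg ?z\<bar> < e" using d u by (simp add: dist_norm)
    moreover have "?z \<noteq> 0" using u by auto
    then have "cis (Arg ?z) = ?z" using u by (simp add: cis_Arg sgn_div_norm norm_divide)
    then have "u = cis (t0 + Arg ?z)" by (simp add: cis_mult[symmetric] field_simps)
    ultimately show "\<exists>s. \<bar>s\<bar> < e \<and> u = cis (t0 + s)" by blast
  qed
  then show ?thesis using d by blast
qed


lemma line_part:
  fixes M :: "real set" and I :: "int \<Rightarrow> real set" and l' :: "int \<Rightarrow> real"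
  assumes M: "M \<in> line_models"
    and Iint: "\<forall>i. \<exists>a b. a < b \<and> I i = {a<..<b}"
    and IM: "\<forall>i. I i \<subseteq> M"
    and Idisj: "\<forall>i j. i \<noteq> j \<longrightarrow> I i \<inter> I j = {}"
    and dense: "M \<subseteq> closure (\<Union>i. I i)"
    and lpos: "\<forall>i. l' i > 0"
    and summ: "\<forall>S. (\<exists>c d. (\<Union>i\<in>S. I i) \<subseteq> {c..d}) \<longrightarrow> l' summable_on S"
  shows "\<exists>(\<phi>::real \<Rightarrow> real) \<psi>.
          homeomorphism M (\<phi> ` M) \<phi> \<psi> \<and>
          (\<forall>i. emeasure lebesgue (\<phi> ` I i) = ennreal (l' i)) \<and>
          \<phi> ` (M - (\<Union>i. I i)) \<in> null_sets lebesgue"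
proof -
  obtain A B where AB: "\<And>i. A i < B i \<and> I i = {A i<..<B i}" using Iint by metis
  define J where "J n = I (int_decode n)" for n
  interpret G: gaps J "A \<circ> int_decode" "B \<circ> int_decode" "l' \<circ> int_decode"
  proof
    fix n show "(A \<circ> int_decode) n < (B \<circ> int_decode) n" using AB by simp
    show "J n = {(A \<circ> int_decode) n<..<(B \<circ> int_decode) n}" using AB by (simp add: J_def)
    show "0 < (l' \<circ> int_decode) n" using lpos by simp
  next
    fix n m :: nat assume "n \<noteq> m"
    then have "int_decode n \<noteq> int_decode m" by (simp add: int_decode_eq)
    then show "J n \<inter> J m = {}" using Idisj by (simp add: J_def)
  next
    fix S :: "nat set" assume "\<exists>c d. (\<Union>n\<in>S. J n) \<subseteq> {c..d}"
    then have "\<exists>c d. (\<Union>i\<in>int_decode ` S. I i) \<subseteq> {c..d}" by (auto simp: J_def)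
    then have "l' summable_on (int_decode ` S)" using summ by blast
    then show "(l' \<circ> int_decode) summable_on S"
      by (subst summable_on_reindex[symmetric]) (auto intro: inj_on_subset[OF inj_int_decode])
  qed
  define \<phi> where "\<phi> = G.phi 0"
  have IJ: "I i = J (int_encode i)" for i by (simp add: J_def)
  have UJ: "(\<Union>i. I i) = (\<Union>n. J n)"
    by (auto simp: J_def) (metis int_encode_inverse)
  have strict: "\<phi> x < \<phi> y" if "x < y" "{x<..<y} \<subseteq> M" for x y
  proof -
    have "(x + y) / 2 \<in> {x<..<y}" using that by auto
    then have "(x + y) / 2 \<in> {x<..<y} \<inter> closure (\<Union>i. I i)" using that dense by blast
    then have "{x<..<y} \<inter> (\<Union>i. I i) \<noteq> {}"
      using open_Int_closure_eq_empty[of "{x<..<y}" "\<Union>i. I i"] by (metis empty_iff open_greaterThanLessThan)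
    then obtain n where "J n \<inter> {x<..<y} \<noteq> {}" unfolding UJ by auto
    then show ?thesis unfolding \<phi>_def using G.phi_strict[OF \<open>x < y\<close>] by blast
  qed
  have cont: "continuous_on S \<phi>" for S
    unfolding \<phi>_def using G.phi_cont continuous_on_subset by blast
  have meas: "emeasure lebesgue (\<phi> ` I i) = ennreal (l' i)" for i
    using lpos G.phi_img[of 0 "int_encode i"] unfolding IJ \<phi>_def
    by (simp add: less_imp_le)
  have null01: "\<phi> ` ({0..1} - (\<Union>i. I i)) \<in> null_sets lebesgue" if "M \<noteq> UNIV"
  proof -
    have "M = {0..<1} \<or> M = {0..1}" using M that by (auto simp: line_models_def)
    then have "{x<..<y} \<subseteq> M" if "x \<in> {0..1}" "y \<in> {0..1}" for x y using that by auto
    then have "inj_on \<phi> {0..1}" by (intro strict_inj strict) auto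
    then show ?thesis unfolding UJ \<phi>_def by (intro G.phi_null) auto
  qed
  consider "M = UNIV" | "M = {0..<1}" | "M = {0..1}" using M by (auto simp: line_models_def)
  then show ?thesis
  proof cases
    case 1
    have inj: "inj_on \<phi> UNIV" by (intro strict_inj strict) (auto simp: 1)
    obtain \<psi> where h: "homeomorphism UNIV (\<phi> ` UNIV) \<phi> \<psi>"
      using invariance_of_domain_homeomorphism[of UNIV \<phi>] inj cont by auto
    have "\<phi> ` (UNIV - (\<Union>i. I i)) = (\<Union>k::nat. \<phi> ` ({-real k..real k} - (\<Union>i. I i)))"
    proof -
      have "UNIV - (\<Union>i. I i) = (\<Union>k::nat. {-real k..real k} - (\<Union>i. I i))"
      proof (auto)
        fix x :: real
        obtain k :: nat where "\<bar>x\<bar> \<le> real k" using real_arch_simple by blast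
        then show "\<exists>k::nat. - real k \<le> x \<and> x \<le> real k" by (intro exI[of _ k]) auto
      qed
      then show ?thesis by auto
    qed
    moreover have "\<phi> ` ({-real k..real k} - (\<Union>i. I i)) \<in> null_sets lebesgue" for k :: nat
      unfolding UJ \<phi>_def using inj unfolding \<phi>_def
      by (intro G.phi_null) (auto intro: inj_on_subset)
    ultimately have "\<phi> ` (UNIV - (\<Union>i. I i)) \<in> null_sets lebesgue" by auto
    then show ?thesis using h meas 1 by blast
  next
    case 2
    have inj: "inj_on \<phi> {0..1}" by (intro strict_inj strict) (auto simp: 2)
    obtain \<psi> where h: "homeomorphism {0..1} (\<phi> ` {0..1}) \<phi> \<psi>"
      using homeomorphism_compact[of "{0..1::real}" \<phi>] inj cont by auto
    then have h': "homeomorphism M (\<phi> ` M) \<phi> \<psi>"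
      unfolding 2 by (rule homeomorphism_of_subsets) auto
    have "\<phi> ` (M - (\<Union>i. I i)) \<subseteq> \<phi> ` ({0..1} - (\<Union>i. I i))" unfolding 2 by auto
    moreover have "{0..<1::real} \<noteq> UNIV" by auto
    ultimately have "\<phi> ` (M - (\<Union>i. I i)) \<in> null_sets lebesgue"
      using null01 2 null_sets_completion_subset by metis
    then show ?thesis using h' meas by blast
  next
    case 3
    have inj: "inj_on \<phi> {0..1}" by (intro strict_inj strict) (auto simp: 3)
    obtain \<psi> where h: "homeomorphism {0..1} (\<phi> ` {0..1}) \<phi> \<psi>"
      using homeomorphism_compact[of "{0..1::real}" \<phi>] inj cont by auto
    then show ?thesis using null01 3 meas by auto
  qed
qed


lemma E_meas: "(\<lambda>s. of_real r * cis (s / r)) \<in> borel_measurable borel"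
proof (cases "r = 0")
  case True then show ?thesis by simp
next
  case False then show ?thesis
    by (intro borel_measurable_continuous_onI continuous_intros) auto
qed

lemma circle_em:
  assumes B: "B \<in> sets borel"
  shows "emeasure (circle_measure r) B = emeasure lborel ({0..<2*pi*r} \<inter> (\<lambda>s. of_real r * cis (s / r)) -` B)"
proof -
  have m: "(\<lambda>s. of_real r * cis (s / r)) \<in> measurable (restrict_space lborel {0..<2*pi*r}) borel"
    by (rule measurable_restrict_space1) (simp add: E_meas)
  have "emeasure (circle_measure r) B = emeasure (restrict_space lborel {0..<2*pi*r})
         ((\<lambda>s. of_real r * cis (s / r)) -` B \<inter> space (restrict_space lborel {0..<2*pi*r}))"
    unfolding circle_measure_def by (rule emeasure_distr[OF m B])
  also have "\<dots> = emeasure lborel ({0..<2*pi*r} \<inter> (\<lambda>s. of_real r * cis (s / r)) -` B)"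
    by (subst emeasure_restrict_space) (auto simp: Int_commute)
  finally show ?thesis .
qed

lemma sets_circle_measure[simp]: "sets (circle_measure r) = sets borel"
  by (simp add: circle_measure_def)

lemma img_borel:
  fixes E :: "real \<Rightarrow> complex"
  assumes "continuous_on UNIV E"
  shows "E ` {p<..<q} \<in> sets borel"
proof -
  have eq: "{p<..<q} = (\<Union>n::nat. {p + 1/(real n+1)..q - 1/(real n+1)})"
  proof (intro set_eqI iffI)
    fix x assume "x \<in> {p<..<q}"
    then have "0 < min (x - p) (q - x)" by auto
    then obtain n :: nat where "inverse (real (Suc n)) < min (x - p) (q - x)"
      using reals_Archimedean by blast
    then have h: "1/(real n+1) < x - p \<and> 1/(real n+1) < q - x" by (simp add: inverse_eq_divide add.commute)
    then have "x \<in> {p + 1/(real n+1)..q - 1/(real n+1)}" unfolding atLeastAtMost_iff by linarith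
    then show "x \<in> (\<Union>n::nat. {p + 1/(real n+1)..q - 1/(real n+1)})" by blast
  next
    fix x assume "x \<in> (\<Union>n::nat. {p + 1/(real n+1)..q - 1/(real n+1)})"
    then obtain n :: nat where n: "x \<in> {p + 1/(real n+1)..q - 1/(real n+1)}" by blast
    have "0 < 1 / (real n + 1)" by simp
    then show "x \<in> {p<..<q}" using n unfolding atLeastAtMost_iff greaterThanLessThan_iff by linarith
  qed
  have "E ` {p + 1/(real n+1)..q - 1/(real n+1)} \<in> sets borel" for n :: nat
    by (intro borel_closed compact_imp_closed compact_continuous_image continuous_on_subset[OF assms]) auto
  then have "(\<Union>n::nat. E ` {p + 1/(real n+1)..q - 1/(real n+1)}) \<in> sets borel" by auto
  then show ?thesis by (subst eq) (simp add: image_UN)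
qed

lemma circle_part:
  fixes I :: "int \<Rightarrow> complex set" and l' :: "int \<Rightarrow> real"
  assumes Iarc: "\<forall>i. \<exists>\<alpha> \<beta>. \<alpha> < \<beta> \<and> \<beta> - \<alpha> \<le> 2*pi \<and> I i = cis ` {\<alpha><..<\<beta>}"
    and Idisj: "\<forall>i j. i \<noteq> j \<longrightarrow> I i \<inter> I j = {}"
    and dense: "sphere 0 1 \<subseteq> closure (\<Union>i. I i)"
    and lpos: "\<forall>i. l' i > 0"
    and summ: "\<forall>S. (\<exists>\<alpha> \<beta>. \<beta> - \<alpha> \<le> 2*pi \<and> (\<Union>i\<in>S. I i) \<subseteq> cis ` {\<alpha>..\<beta>}) \<longrightarrow> l' summable_on S"
  shows "\<exists>(r::real) (\<phi>::complex \<Rightarrow> complex) \<psi>. r > 0 \<and>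
          homeomorphism (sphere 0 1) (sphere 0 r) \<phi> \<psi> \<and>
          (\<forall>i. emeasure (circle_measure r) (\<phi> ` I i) = ennreal (l' i)) \<and>
          \<phi> ` (sphere 0 1 - (\<Union>i. I i)) \<in> null_sets (circle_measure r)"
proof -
  obtain \<alpha> \<beta> where AB: "\<And>i. \<alpha> i < \<beta> i \<and> \<beta> i - \<alpha> i \<le> 2*pi \<and> I i = cis ` {\<alpha> i<..<\<beta> i}"
    using Iarc by metis
  define t0 where "t0 = \<alpha> 0"
  have notin: "cis t0 \<notin> I i" for i
  proof
    assume "cis t0 \<in> I i"
    then obtain t where t: "t \<in> {\<alpha> i<..<\<beta> i}" "cis t0 = cis t" using AB by auto
    show False
    proof (cases "i = 0")
      case True
      then have "\<bar>t - t0\<bar> < 2*pi" using t AB[of 0] by (auto simp: t0_def)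
      then have "t = t0" using t by (intro cis_inj) auto
      then show False using t True by (auto simp: t0_def)
    next
      case False
      define e where "e = min (\<beta> i - t) (\<beta> 0 - \<alpha> 0) / 2"
      have e: "e > 0" "e < \<beta> i - t" "e < \<beta> 0 - \<alpha> 0"
        using t AB[of 0] by (auto simp: e_def)
      have "cis (t0 + e) = cis (t + e)" by (simp add: cis_mult[symmetric] t(2))
      moreover have "cis (t + e) \<in> I i" using AB[of i] t e by auto
      moreover have "cis (t0 + e) \<in> I 0" using AB[of 0] e by (auto simp: t0_def)
      ultimately show False using Idisj False by fastforce
    qed
  qed
  define k where "k i = \<lfloor>(\<alpha> i - t0) / (2*pi)\<rfloor>" for i
  define a where "a i = \<alpha> i - 2 * pi * k i" for i
  define b where "b i = \<beta> i - 2 * pi * k i" for i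
  have a_ge: "t0 \<le> a i" and a_lt: "a i < t0 + 2*pi" for i
  proof -
    have "real_of_int (k i) \<le> (\<alpha> i - t0) / (2*pi)" "(\<alpha> i - t0) / (2*pi) < real_of_int (k i) + 1"
      unfolding k_def by linarith+
    then have "2*pi * k i \<le> \<alpha> i - t0" "\<alpha> i - t0 < 2*pi * k i + 2*pi"
      by (simp_all add: field_simps)
    then show "t0 \<le> a i" "a i < t0 + 2*pi" by (auto simp: a_def)
  qed
  have ab: "a i < b i" "b i - a i \<le> 2*pi" for i using AB[of i] by (auto simp: a_def b_def)
  have Iab: "I i = cis ` {a i<..<b i}" for i
  proof -
    have tr: "(\<lambda>t. t + c) ` {p<..<q} = {p + c<..<q + c}" for c p q :: real
    proof (intro set_eqI iffI)
      fix x assume "x \<in> {p + c<..<q + c}"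
      then show "x \<in> (\<lambda>t. t + c) ` {p<..<q}" by (intro rev_image_eqI[of "x - c"]) auto
    qed auto
    have "cis ` {a i<..<b i} = (\<lambda>t. cis (t + 2 * pi * of_int (k i))) ` {a i<..<b i}"
      by (simp only: cis_period_int)
    also have "\<dots> = cis ` ((\<lambda>t. t + 2 * pi * of_int (k i)) ` {a i<..<b i})" by (simp add: image_image)
    also have "(\<lambda>t. t + 2 * pi * of_int (k i)) ` {a i<..<b i} = {\<alpha> i<..<\<beta> i}"
      unfolding tr a_def b_def by simp
    finally show ?thesis using AB[of i] by simp
  qed
  have b_le: "b i \<le> t0 + 2*pi" for i
  proof (rule ccontr)
    assume "\<not> b i \<le> t0 + 2*pi"
    then have "t0 + 2*pi \<in> {a i<..<b i}" using a_lt[of i] by auto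
    then have "cis (t0 + 2*pi) \<in> I i" unfolding Iab by blast
    then show False using notin by (simp add: cis_period)
  qed
  define J where "J i = {a i<..<b i}" for i
  have J_sub: "J i \<subseteq> {t0<..<t0+2*pi}" for i using a_ge[of i] b_le[of i] by (auto simp: J_def)
  have I_J: "cis t \<in> I i \<longleftrightarrow> t \<in> J i" if "t0 \<le> t" "t < t0 + 2*pi" for t i
  proof
    assume "cis t \<in> I i"
    then obtain s where s: "s \<in> J i" "cis t = cis s" unfolding Iab J_def by auto
    then have "s \<in> {t0<..<t0+2*pi}" using J_sub[of i] by blast
    then have "\<bar>t - s\<bar> < 2*pi" using that by auto
    then have "t = s" using s by (intro cis_inj) auto
    then show "t \<in> J i" using s by simp
  qed (auto simp: Iab J_def)
  have Isph: "I i \<subseteq> sphere 0 1" for i unfolding Iab by auto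
  interpret G: gaps "J \<circ> int_decode" "a \<circ> int_decode" "b \<circ> int_decode" "l' \<circ> int_decode"
  proof
    fix n show "(a \<circ> int_decode) n < (b \<circ> int_decode) n" using ab by simp
    show "(J \<circ> int_decode) n = {(a \<circ> int_decode) n<..<(b \<circ> int_decode) n}" by (simp add: J_def)
    show "0 < (l' \<circ> int_decode) n" using lpos by simp
  next
    fix n m :: nat assume "n \<noteq> m"
    then have nm: "int_decode n \<noteq> int_decode m" by (simp add: int_decode_eq)
    show "(J \<circ> int_decode) n \<inter> (J \<circ> int_decode) m = {}"
    proof (rule ccontr)
      assume "(J \<circ> int_decode) n \<inter> (J \<circ> int_decode) m \<noteq> {}"
      then obtain t where "t \<in> J (int_decode n)" "t \<in> J (int_decode m)" by auto
      then have "cis t \<in> I (int_decode n)" "cis t \<in> I (int_decode m)" unfolding Iab J_def by auto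
      then show False using Idisj nm by blast
    qed
  next
    fix S :: "nat set"
    have "(\<Union>i\<in>int_decode ` S. I i) \<subseteq> cis ` {t0..t0 + 2*pi}" using Isph cis_image by blast
    then have "l' summable_on (int_decode ` S)" using summ by (metis add_diff_cancel_left' order_refl)
    then show "(l' \<circ> int_decode) summable_on S"
      by (subst summable_on_reindex[symmetric]) (auto intro: inj_on_subset[OF inj_int_decode])
  qed
  define f where "f = G.phi t0"
  have JJ: "J i = (J \<circ> int_decode) (int_encode i)" for i by simp
  have UJ: "(\<Union>n. (J \<circ> int_decode) n) = (\<Union>i. J i)"
    by auto (metis int_encode_inverse)
  have strict: "f x < f y" if xy: "x < y" "t0 \<le> x" "y \<le> t0 + 2*pi" for x y
  proof -
    define m where "m = (x + y) / 2"
    obtain d where d: "d > 0" "\<And>u. norm u = 1 \<and> norm (u - cis m) < d \<Longrightarrow> \<exists>s. \<bar>s\<bar> < (y - x) / 2 \<and> u = cis (m + s)"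
      using near_cis[of "(y - x) / 2" m] xy by auto
    have "cis m \<in> closure (\<Union>i. I i)" using dense by auto
    then obtain u where u: "u \<in> (\<Union>i. I i)" "dist u (cis m) < d"
      using d(1) unfolding closure_approachable by blast
    then obtain i where ui: "u \<in> I i" by auto
    then have "u \<in> sphere 0 1" using Isph by blast
    then have "norm u = 1" by simp
    then obtain s where s: "\<bar>s\<bar> < (y - x) / 2" "u = cis (m + s)" using d u by (auto simp: dist_norm)
    have "-((y - x) / 2) < s \<and> s < (y - x) / 2" using s(1) unfolding abs_less_iff by linarith
    then have ms: "x < m + s" "m + s < y" unfolding m_def by (simp_all add: field_simps)
    then have "m + s \<in> J i" using I_J[of "m + s" i] ui s xy by auto
    then have "(J \<circ> int_decode) (int_encode i) \<inter> {x<..<y} \<noteq> {}" using ms by auto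
    then show ?thesis unfolding f_def by (rule G.phi_strict[OF xy(1)])
  qed
  have f0: "f t0 = 0" unfolding f_def by (rule G.phi_base)
  have fmono: "x \<le> y \<Longrightarrow> f x \<le> f y" for x y unfolding f_def by (rule G.phi_mono)
  have fcont: "continuous_on S f" for S unfolding f_def using G.phi_cont continuous_on_subset by blast
  define L where "L = f (t0 + 2*pi)"
  have Lpos: "L > 0" using strict[of t0 "t0 + 2*pi"] f0 by (simp add: L_def)
  define r where "r = L / (2*pi)"
  have rpos: "r > 0" using Lpos by (simp add: r_def)
  have rL: "2*pi*r = L" by (simp add: r_def)
  define E where "E s = of_real r * cis (s / r)" for s
  have E_L: "E L = E 0"
  proof -
    have "L / r = 2*pi" using rL rpos by (simp add: field_simps)
    then show ?thesis by (simp add: E_def)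
  qed
  have E_inj: "s = s'" if "0 \<le> s" "s < L" "0 \<le> s'" "s' < L" "E s = E s'" for s s'
  proof -
    have "cis (s / r) = cis (s' / r)" using that rpos by (simp add: E_def)
    moreover have "\<bar>s / r - s' / r\<bar> < 2*pi"
    proof -
      have "\<bar>s - s'\<bar> < 2*pi*r" using that rL by auto
      then have "\<bar>s - s'\<bar> / r < 2*pi" using rpos by (simp add: divide_less_eq)
      then show ?thesis using rpos by (simp add: diff_divide_distrib[symmetric])
    qed
    ultimately have "s / r = s' / r" by (rule cis_inj)
    then show ?thesis using rpos by simp
  qed
  have E_norm: "norm (E s) = r" for s using rpos by (simp add: E_def norm_mult)
  have E_cont: "continuous_on S E" for S
    unfolding E_def using rpos by (intro continuous_intros) auto
  have frange: "0 \<le> f t \<and> f t < L" if "t0 \<le> t" "t < t0 + 2*pi" for t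
    using fmono[of t0 t] strict[of t "t0 + 2*pi"] that f0 by (auto simp: L_def)
  define \<Phi> where "\<Phi> z = E (f (thet t0 z))" for z
  have \<Phi>C: "\<Phi> (cis t) = E (f t)" if "t0 \<le> t" "t \<le> t0 + 2*pi" for t
  proof (cases "t = t0 + 2*pi")
    case True
    have "cis t = cis t0" unfolding True by (rule cis_period)
    moreover have "thet t0 (cis t0) = t0" using thet_cis[of t0 t0] pi_gt_zero by linarith
    ultimately have "\<Phi> (cis t) = E 0" unfolding \<Phi>_def using f0 by simp
    moreover have "E (f t) = E L" unfolding L_def True ..
    ultimately show ?thesis using E_L by simp
  next
    case False
    then show ?thesis using that thet_cis[of t0 t] by (simp add: \<Phi>_def)
  qed
  have \<Phi>cont: "continuous_on (sphere 0 1) \<Phi>"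
  proof (rule cont_via_cis[of t0])
    have "continuous_on {t0..t0+2*pi} (E \<circ> f)"
      by (intro continuous_on_compose fcont E_cont)
    then show "continuous_on {t0..t0+2*pi} (\<Phi> \<circ> cis)"
      by (rule continuous_on_cong[THEN iffD1, rotated -1]) (auto simp: \<Phi>C)
  qed
  have thet_in: "t0 \<le> thet t0 z" "thet t0 z < t0 + 2*pi" for z using thet_range by auto
  have \<Phi>inj: "inj_on \<Phi> (sphere 0 1)"
  proof (rule inj_onI)
    fix z1 z2 :: complex assume z: "z1 \<in> sphere 0 1" "z2 \<in> sphere 0 1" "\<Phi> z1 = \<Phi> z2"
    let ?t1 = "thet t0 z1" and ?t2 = "thet t0 z2"
    have th: "t0 \<le> ?t1" "?t1 \<le> t0+2*pi" "t0 \<le> ?t2" "?t2 \<le> t0+2*pi"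
      using thet_in[of z1] thet_in[of z2] by (auto intro: less_imp_le)
    have r1: "0 \<le> f ?t1" "f ?t1 < L" using frange[of ?t1] thet_in[of z1] by blast+
    have r2: "0 \<le> f ?t2" "f ?t2 < L" using frange[of ?t2] thet_in[of z2] by blast+
    have "f ?t1 = f ?t2"
      using z(3) unfolding \<Phi>_def by (rule E_inj[OF r1 r2])
    moreover have "?t1 < ?t2 \<Longrightarrow> f ?t1 < f ?t2" using strict th by blast
    moreover have "?t2 < ?t1 \<Longrightarrow> f ?t2 < f ?t1" using strict th by blast
    ultimately have "?t1 = ?t2" by argo
    then have "cis ?t1 = cis ?t2" by (rule arg_cong)
    then show "z1 = z2" by (simp only: cis_thet[OF z(1)] cis_thet[OF z(2)])
  qed
  have \<Phi>img: "\<Phi> ` sphere 0 1 = sphere 0 r"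
  proof
    show "\<Phi> ` sphere 0 1 \<subseteq> sphere 0 r" using E_norm by (auto simp: \<Phi>_def)
  next
    show "sphere 0 r \<subseteq> \<Phi> ` sphere 0 1"
    proof
      fix w :: complex assume w: "w \<in> sphere 0 r"
      define s where "s = r * Arg2pi w"
      have s: "0 \<le> s" "s < L" using Arg2pi[of w] rpos rL by (auto simp: s_def)
      have "E s = w"
      proof -
        have "is_Arg w (Arg2pi w)" using Arg2pi by blast
        then show ?thesis using w rpos by (simp add: is_Arg_def E_def s_def cis_conv_exp)
      qed
      have "s \<in> f ` {t0..t0+2*pi}"
        using G.phi_image_Icc[of t0 "t0 + 2*pi" t0] s f0 by (auto simp: f_def L_def)
      then obtain t where t: "t \<in> {t0..t0+2*pi}" "s = f t" by auto
      then have "\<Phi> (cis t) = w" using \<Phi>C \<open>E s = w\<close> by auto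
      then show "w \<in> \<Phi> ` sphere 0 1" by (metis image_eqI mem_sphere_0 norm_cis)
    qed
  qed
  obtain \<psi> where hom: "homeomorphism (sphere 0 1) (sphere 0 r) \<Phi> \<psi>"
    using homeomorphism_compact[of "sphere (0::complex) 1" \<Phi> "sphere 0 r"] \<Phi>cont \<Phi>inj \<Phi>img by auto
  have Emeas: "E \<in> borel_measurable borel" unfolding E_def by (rule E_meas)
  have rL': "2*pi*r = L" by (rule rL)
  have cem: "emeasure (circle_measure r) B = emeasure lborel ({0..<L} \<inter> E -` B)" if "B \<in> sets borel" for B
    using circle_em[OF that, of r] unfolding rL' E_def .
  have ai: "(a \<circ> int_decode) (int_encode i) = a i" "(b \<circ> int_decode) (int_encode i) = b i"
    "(l' \<circ> int_decode) (int_encode i) = l' i" "(J \<circ> int_decode) (int_encode i) = J i" for i by simp_all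
  have fJ: "f ` J i = {f (a i)<..<f (a i) + l' i}" for i
    using G.phi_img[of t0 "int_encode i"] unfolding ai f_def .
  have fb: "f (b i) = f (a i) + l' i" for i
    using G.phi_affine[of "int_encode i" "b i" t0] G.cc_len[of "int_encode i"] ab[of i]
    unfolding ai f_def by simp
  have PhiI: "\<Phi> ` I i = E ` {f (a i)<..<f (a i) + l' i}" for i
  proof -
    have "\<Phi> ` I i = (\<lambda>t. \<Phi> (cis t)) ` J i" unfolding Iab J_def by (simp add: image_image)
    also have "\<dots> = (\<lambda>t. E (f t)) ` J i"
    proof (rule image_cong[OF refl])
      fix t assume "t \<in> J i"
      then have "t \<in> {t0<..<t0+2*pi}" using J_sub by blast
      then show "\<Phi> (cis t) = E (f t)" by (intro \<Phi>C) auto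
    qed
    also have "\<dots> = E ` (f ` J i)" by (simp add: image_image)
    finally show ?thesis unfolding fJ .
  qed
  have Kr: "0 \<le> f (a i)" "f (a i) + l' i \<le> L" for i
    using fmono[of t0 "a i"] a_ge[of i] f0 fmono[of "b i" "t0 + 2*pi"] b_le[of i] fb[of i]
    by (auto simp: L_def)
  have Kborel: "\<Phi> ` I i \<in> sets borel" for i unfolding PhiI by (rule img_borel[OF E_cont])
  have meas: "emeasure (circle_measure r) (\<Phi> ` I i) = ennreal (l' i)" for i
  proof -
    let ?K = "{f (a i)<..<f (a i) + l' i}"
    have "{0..<L} \<inter> E -` (E ` ?K) = ?K"
    proof (intro set_eqI iffI)
      fix s assume "s \<in> {0..<L} \<inter> E -` (E ` ?K)"
      then obtain k where k: "k \<in> ?K" "E s = E k" "0 \<le> s" "s < L" by auto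
      have "s = k" using k Kr[of i] by (intro E_inj) auto
      then show "s \<in> ?K" using k by simp
    next
      fix s assume "s \<in> ?K"
      then show "s \<in> {0..<L} \<inter> E -` (E ` ?K)" using Kr[of i] by auto
    qed
    then show ?thesis using cem[OF Kborel[of i]] lpos unfolding PhiI by (simp add: less_imp_le)
  qed
  let ?B0 = "\<Phi> ` (sphere 0 1 - (\<Union>i. I i))"
  have B0eq: "?B0 = sphere 0 r - (\<Union>i. \<Phi> ` I i)"
  proof
    show "?B0 \<subseteq> sphere 0 r - (\<Union>i. \<Phi> ` I i)"
    proof
      fix y assume "y \<in> ?B0"
      then obtain z where z: "z \<in> sphere 0 1" "z \<notin> (\<Union>i. I i)" "y = \<Phi> z" by auto
      have "y \<notin> \<Phi> ` I i" for i
      proof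
        assume "y \<in> \<Phi> ` I i"
        then obtain z' where z': "z' \<in> I i" "y = \<Phi> z'" by auto
        then have "z' = z" using \<Phi>inj z Isph[of i] by (auto dest: inj_onD)
        then show False using z z' by auto
      qed
      then show "y \<in> sphere 0 r - (\<Union>i. \<Phi> ` I i)" using z \<Phi>img by auto
    qed
  next
    show "sphere 0 r - (\<Union>i. \<Phi> ` I i) \<subseteq> ?B0"
    proof
      fix y assume y: "y \<in> sphere 0 r - (\<Union>i. \<Phi> ` I i)"
      then obtain z where z: "z \<in> sphere 0 1" "y = \<Phi> z" using \<Phi>img by (metis Diff_iff imageE)
      have "z \<notin> I i" for i using y z by auto
      then show "y \<in> ?B0" using z by auto
    qed
  qed
  have B0borel: "?B0 \<in> sets borel"
  proof -
    have "(\<Union>i. \<Phi> ` I i) \<in> sets borel"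
      using Kborel by (intro sets.countable_UN') auto
    moreover have "sphere (0::complex) r \<in> sets borel" by (intro borel_closed) auto
    ultimately show ?thesis unfolding B0eq by (rule sets.Diff[rotated])
  qed
  have injf: "inj_on f {t0..t0+2*pi}"
    by (rule strict_inj) (use strict in auto)
  have Nnull: "f ` ({t0..t0+2*pi} - (\<Union>n. (J \<circ> int_decode) n)) \<in> null_sets lebesgue"
    unfolding f_def by (rule G.phi_null) (use injf in \<open>auto simp: f_def\<close>)
  let ?P = "{0..<L} \<inter> E -` ?B0"
  have Psub: "?P \<subseteq> f ` ({t0..t0+2*pi} - (\<Union>n. (J \<circ> int_decode) n))"
  proof
    fix s assume s: "s \<in> ?P"
    then obtain z where z: "z \<in> sphere 0 1" "z \<notin> (\<Union>i. I i)" "E s = \<Phi> z" by auto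
    let ?t = "thet t0 z"
    have t: "t0 \<le> ?t" "?t < t0 + 2*pi" by (rule thet_in)+
    have "E s = E (f ?t)" using z by (simp add: \<Phi>_def)
    then have "s = f ?t" using s frange[OF t] by (intro E_inj) auto
    moreover have "?t \<notin> J i" for i
    proof
      assume "?t \<in> J i"
      then have "cis ?t \<in> I i" using I_J[OF t] by simp
      then show False using z cis_thet[OF z(1)] by auto
    qed
    then have "?t \<notin> (\<Union>n. (J \<circ> int_decode) n)" unfolding UJ by auto
    ultimately show "s \<in> f ` ({t0..t0+2*pi} - (\<Union>n. (J \<circ> int_decode) n))" using t by auto
  qed
  have Pborel: "?P \<in> sets borel"
    using measurable_sets[OF Emeas B0borel] by auto
  have "?P \<in> null_sets lebesgue" by (rule null_sets_completion_subset[OF Psub Nnull])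
  then have "emeasure lborel ?P = 0" using Pborel by (simp add: null_sets_def)
  then have "?B0 \<in> null_sets (circle_measure r)"
    using cem[OF B0borel] B0borel by (simp add: null_sets_def)
  then show ?thesis using rpos hom meas by blast
qed

theorem lemma2p4:
  shows
  "(\<forall>(M::real set) (I::int \<Rightarrow> real set) (l'::int \<Rightarrow> real).
      M \<in> line_models \<and>
      (\<forall>i. \<exists>a b. a < b \<and> I i = {a<..<b}) \<and>
      (\<forall>i. I i \<subseteq> M) \<and>
      (\<forall>i j. i \<noteq> j \<longrightarrow> I i \<inter> I j = {}) \<and>
      M \<subseteq> closure (\<Union>i. I i) \<and>
      (\<forall>i. l' i > 0) \<and>
      (\<forall>S. (\<exists>c d. (\<Union>i\<in>S. I i) \<subseteq> {c..d}) \<longrightarrow> l' summable_on S)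
    \<longrightarrow> (\<exists>(\<phi>::real \<Rightarrow> real) \<psi>.
          homeomorphism M (\<phi> ` M) \<phi> \<psi> \<and>
          (\<forall>i. emeasure lebesgue (\<phi> ` I i) = ennreal (l' i)) \<and>
          \<phi> ` (M - (\<Union>i. I i)) \<in> null_sets lebesgue))
   \<and>
   (\<forall>(I::int \<Rightarrow> complex set) (l'::int \<Rightarrow> real).
      (\<forall>i. \<exists>\<alpha> \<beta>. \<alpha> < \<beta> \<and> \<beta> - \<alpha> \<le> 2*pi \<and> I i = cis ` {\<alpha><..<\<beta>}) \<and>
      (\<forall>i j. i \<noteq> j \<longrightarrow> I i \<inter> I j = {}) \<and>
      sphere 0 1 \<subseteq> closure (\<Union>i. I i) \<and>
      (\<forall>i. l' i > 0) \<and>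
      (\<forall>S. (\<exists>\<alpha> \<beta>. \<beta> - \<alpha> \<le> 2*pi \<and> (\<Union>i\<in>S. I i) \<subseteq> cis ` {\<alpha>..\<beta>}) \<longrightarrow> l' summable_on S)
    \<longrightarrow> (\<exists>(r::real) (\<phi>::complex \<Rightarrow> complex) \<psi>. r > 0 \<and>
          homeomorphism (sphere 0 1) (sphere 0 r) \<phi> \<psi> \<and>
          (\<forall>i. emeasure (circle_measure r) (\<phi> ` I i) = ennreal (l' i)) \<and>
          \<phi> ` (sphere 0 1 - (\<Union>i. I i)) \<in> null_sets (circle_measure r)))"
proof (intro conjI allI impI)
  fix M :: "real set" and I :: "int \<Rightarrow> real set" and l' :: "int \<Rightarrow> real"
  assume "M \<in> line_models \<and>
      (\<forall>i. \<exists>a b. a < b \<and> I i = {a<..<b}) \<and>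
      (\<forall>i. I i \<subseteq> M) \<and>
      (\<forall>i j. i \<noteq> j \<longrightarrow> I i \<inter> I j = {}) \<and>
      M \<subseteq> closure (\<Union>i. I i) \<and>
      (\<forall>i. l' i > 0) \<and>
      (\<forall>S. (\<exists>c d. (\<Union>i\<in>S. I i) \<subseteq> {c..d}) \<longrightarrow> l' summable_on S)"
  then show "\<exists>(\<phi>::real \<Rightarrow> real) \<psi>.
          homeomorphism M (\<phi> ` M) \<phi> \<psi> \<and>
          (\<forall>i. emeasure lebesgue (\<phi> ` I i) = ennreal (l' i)) \<and>
          \<phi> ` (M - (\<Union>i. I i)) \<in> null_sets lebesgue"
    by (intro line_part) auto
next
  fix I :: "int \<Rightarrow> complex set" and l' :: "int \<Rightarrow> real"
  assume "(\<forall>i. \<exists>\<alpha> \<beta>. \<alpha> < \<beta> \<and> \<beta> - \<alpha> \<le> 2*pi \<and> I i = cis ` {\<alpha><..<\<beta>}) \<and>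
      (\<forall>i j. i \<noteq> j \<longrightarrow> I i \<inter> I j = {}) \<and>
      sphere 0 1 \<subseteq> closure (\<Union>i. I i) \<and>
      (\<forall>i. l' i > 0) \<and>
      (\<forall>S. (\<exists>\<alpha> \<beta>. \<beta> - \<alpha> \<le> 2*pi \<and> (\<Union>i\<in>S. I i) \<subseteq> cis ` {\<alpha>..\<beta>}) \<longrightarrow> l' summable_on S)"
  then show "\<exists>(r::real) (\<phi>::complex \<Rightarrow> complex) \<psi>. r > 0 \<and>
          homeomorphism (sphere 0 1) (sphere 0 r) \<phi> \<psi> \<and>
          (\<forall>i. emeasure (circle_measure r) (\<phi> ` I i) = ennreal (l' i)) \<and>
          \<phi> ` (sphere 0 1 - (\<Union>i. I i)) \<in> null_sets (circle_measure r)"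
    by (intro circle_part) auto
qed

end
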